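(* Consider smoothed MCA-$(p,q,r)$ with $m$ constraints over $n$ variables, where for every constraint $C_i$ and every assignment $v\in[r]^{p_i}$ the value $C_i(v)$ is drawn independently from a distribution with density $f_{i,v}:[0,1]\to[0,\phi]$. Then the expected maximum number of iterations of local search (over all initial assignments and all improving sequences) is $O(r^{2p(q+1)+2}nm^2\phi)$.
   Context: MCA-$(p,q,r)$ (Maximum Constraint Assignment): given variables $x_1,\dots,x_n$ and constraints $C_1,\dots,C_m$, each $C_i$ associated with $p_i\le p$ variables $x_{i_1},\dots,x_{i_{p_i}}$ and evaluated as a function $C_i:[r]^{p_i}\to[0,1]$ (given as a table of values), where each variable appears in at most $q$ constraints. Feasible solutions are assignments $a:\{x_1,\dots,x_n\}\to[r]$, with weight $\sum_{i=1}^mC_i(a(x_{i_1}),\dots,a(x_{i_{p_i}}))$ to be maximized. Neighbours of $a$ are obtained by changing the value of a single variable. A solution has no neighbour of strictly larger weight; local search repeatedly moves to a strictly better neighbour. *)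

theory Defs
  imports "HOL-Probability.Probability"
begin

text \<open>MCA-(p,q,r): variables are indexed by 0..<n, values [r] = 0..<r, constraints by 0..<m.
  The random constraint values are a function om on pairs (i, v), v a value tuple.\<close>

definition mca_structure :: "nat \<Rightarrow> nat \<Rightarrow> nat \<Rightarrow> nat \<Rightarrow> (nat \<Rightarrow> nat list) \<Rightarrow> bool" where
  "mca_structure n m p q vars \<longleftrightarrow>
     (\<forall>i<m. length (vars i) \<le> p \<and> distinct (vars i) \<and> set (vars i) \<subseteq> {0..<n}) \<and>
     (\<forall>j<n. card {i. i < m \<and> j \<in> set (vars i)} \<le> q)"

definition assignments :: "nat \<Rightarrow> nat \<Rightarrow> (nat \<Rightarrow> nat) set" where
  "assignments n r = ({0..<n} \<rightarrow>\<^sub>E {0..<r})"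

definition weight :: "nat \<Rightarrow> (nat \<Rightarrow> nat list) \<Rightarrow> (nat \<times> nat list \<Rightarrow> real) \<Rightarrow> (nat \<Rightarrow> nat) \<Rightarrow> real" where
  "weight m vars om a = (\<Sum>i<m. om (i, map a (vars i)))"

definition neighbour :: "nat \<Rightarrow> (nat \<Rightarrow> nat) \<Rightarrow> (nat \<Rightarrow> nat) \<Rightarrow> bool" where
  "neighbour n a b \<longleftrightarrow> a \<noteq> b \<and> (\<exists>j<n. \<forall>l. l \<noteq> j \<longrightarrow> a l = b l)"

text \<open>A run of local search: a nonempty sequence of assignments, each a strictly better
  neighbour of the previous one. Its number of iterations is length - 1.\<close>
definition improving_seq :: "nat \<Rightarrow> nat \<Rightarrow> nat \<Rightarrow> (nat \<Rightarrow> nat list) \<Rightarrow> (nat \<times> nat list \<Rightarrow> real)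
    \<Rightarrow> (nat \<Rightarrow> nat) list \<Rightarrow> bool" where
  "improving_seq n r m vars om as \<longleftrightarrow> as \<noteq> [] \<and> set as \<subseteq> assignments n r \<and>
     (\<forall>j. Suc j < length as \<longrightarrow> neighbour n (as ! j) (as ! Suc j) \<and>
          weight m vars om (as ! j) < weight m vars om (as ! Suc j))"

text \<open>Maximum number of iterations over all initial assignments and all improving sequences
  (this set is always bounded, since weights strictly increase along a run).\<close>
definition max_iterations :: "nat \<Rightarrow> nat \<Rightarrow> nat \<Rightarrow> (nat \<Rightarrow> nat list) \<Rightarrow> (nat \<times> nat list \<Rightarrow> real) \<Rightarrow> nat" where
  "max_iterations n r m vars om = Sup {length as - 1 | as. improving_seq n r m vars om as}"

definition value_index :: "nat \<Rightarrow> nat \<Rightarrow> (nat \<Rightarrow> nat list) \<Rightarrow> (nat \<times> nat list) set" where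
  "value_index m r vars = {(i, v). i < m \<and> length v = length (vars i) \<and> set v \<subseteq> {0..<r}}"

definition bounded_density :: "real \<Rightarrow> (real \<Rightarrow> real) \<Rightarrow> bool" where
  "bounded_density \<phi> g \<longleftrightarrow> g \<in> borel_measurable lborel \<and> (\<forall>x. 0 \<le> g x \<and> g x \<le> \<phi>) \<and>
     (\<forall>x. x \<notin> {0..1} \<longrightarrow> g x = 0) \<and> (\<integral>\<^sup>+ x. ennreal (g x) \<partial>lborel) = 1"

definition value_space :: "nat \<Rightarrow> nat \<Rightarrow> (nat \<Rightarrow> nat list) \<Rightarrow> (nat \<Rightarrow> nat list \<Rightarrow> real \<Rightarrow> real)
    \<Rightarrow> (nat \<times> nat list \<Rightarrow> real) measure" where
  "value_space m r vars f = (\<Pi>\<^sub>M iv \<in> value_index m r vars. density lborel (\<lambda>x. ennreal (f (fst iv) (snd iv) x)))"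

end

theory Submission
  imports Defs "HOL-Analysis.Harmonic_Numbers"
begin

definition Rel :: "nat \<Rightarrow> (nat \<Rightarrow> nat list) \<Rightarrow> nat set" where
  "Rel m vars = (\<Union>i<m. set (vars i))"

lemma weight_cong_Rel:
  assumes "\<And>l. l \<in> Rel m vars \<Longrightarrow> a l = b l"
  shows "weight m vars om a = weight m vars om b"
  unfolding weight_def
proof (rule sum.cong[OF refl])
  fix i assume "i \<in> {..<m}"
  then have "map a (vars i) = map b (vars i)" using assms by (auto simp: Rel_def intro!: map_cong)
  then show "om (i, map a (vars i)) = om (i, map b (vars i))" by metis
qed

lemma improving_mono:
  assumes "improving_seq n r m vars om as" "j < j'" "j' < length as"
  shows "weight m vars om (as ! j) < weight m vars om (as ! j')"
  using assms(2,3)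
proof (induction j' )
  case 0 then show ?case by simp
next
  case (Suc k)
  have step: "weight m vars om (as ! k) < weight m vars om (as ! Suc k)"
    using assms(1) Suc.prems unfolding improving_seq_def by blast
  show ?case
  proof (cases "j = k")
    case True then show ?thesis using step by simp
  next
    case False then have "j < k" using Suc.prems by simp
    then show ?thesis using Suc.IH Suc.prems step by simp
  qed
qed

lemma card_Rel: "mca_structure n m p q vars \<Longrightarrow> card (Rel m vars) \<le> m * p"
proof -
  assume a: "mca_structure n m p q vars"
  have "card (Rel m vars) \<le> (\<Sum>i<m. card (set (vars i)))"
    unfolding Rel_def by (rule card_UN_le) simp
  also have "\<dots> \<le> (\<Sum>i<m. p)"
    apply (rule sum_mono) using a unfolding mca_structure_def
    by (meson card_length le_trans lessThan_iff)
  finally show ?thesis by simp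
qed

lemma Rel_sub: "mca_structure n m p q vars \<Longrightarrow> Rel m vars \<subseteq> {0..<n}"
  unfolding mca_structure_def Rel_def by auto

lemma improving_length:
  assumes ms: "mca_structure n m p q vars" and imp: "improving_seq n r m vars om as" and r: "r \<ge> 1"
  shows "length as \<le> r ^ (p * m)"
proof -
  let ?R = "Rel m vars"
  let ?f = "\<lambda>a. restrict a ?R"
  have dist: "distinct (map ?f as)"
  proof (subst distinct_conv_nth, intro allI impI)
    fix i j assume ij: "i < length (map ?f as)" "j < length (map ?f as)" "i \<noteq> j"
    show "map ?f as ! i \<noteq> map ?f as ! j"
    proof
      assume eq: "map ?f as ! i = map ?f as ! j"
      have "weight m vars om (as ! i) = weight m vars om (as ! j)"
      proof (rule weight_cong_Rel)
        fix l assume "l \<in> ?R"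
        then show "(as ! i) l = (as ! j) l" using eq ij
          by (metis length_map nth_map restrict_apply')
      qed
      moreover have "i < j \<or> j < i" using ij by auto
      ultimately show False using improving_mono[OF imp] ij by fastforce
    qed
  qed
  have sub: "set (map ?f as) \<subseteq> ?R \<rightarrow>\<^sub>E {0..<r}"
  proof
    fix x assume "x \<in> set (map ?f as)"
    then obtain a where a: "a \<in> set as" "x = ?f a" by auto
    then have "a \<in> assignments n r" using imp unfolding improving_seq_def by auto
    then show "x \<in> ?R \<rightarrow>\<^sub>E {0..<r}" using a Rel_sub[OF ms]
      unfolding assignments_def by auto
  qed
  have "length as = card (set (map ?f as))" using distinct_card[OF dist] by simp
  also have "\<dots> \<le> card (?R \<rightarrow>\<^sub>E {0..<r})"
    by (rule card_mono[OF _ sub]) (simp add: finite_PiE Rel_def)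
  also have "\<dots> = r ^ card ?R" by (simp add: card_PiE Rel_def)
  also have "\<dots> \<le> r ^ (p * m)"
    using card_Rel[OF ms] r by (simp add: mult.commute power_increasing)
  finally show ?thesis .
qed

definition Lset :: "nat \<Rightarrow> nat \<Rightarrow> nat \<Rightarrow> nat \<Rightarrow> (nat \<Rightarrow> nat) list set" where
  "Lset n r p m = {as. set as \<subseteq> assignments n r \<and> length as \<le> r ^ (p * m)}"

lemma finite_Lset: "finite (Lset n r p m)"
proof -
  have "finite (assignments n r)" unfolding assignments_def by (simp add: finite_PiE)
  then show ?thesis unfolding Lset_def by (rule finite_lists_length_le)
qed

lemma maxit_facts:
  assumes ms: "mca_structure n m p q vars" and r: "r \<ge> 1"
  shows "max_iterations n r m vars om \<le> r ^ (p * m)"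
    and "1 \<le> t \<Longrightarrow> t \<le> max_iterations n r m vars om \<longleftrightarrow>
          (\<exists>as\<in>Lset n r p m. improving_seq n r m vars om as \<and> t \<le> length as - 1)"
proof -
  let ?S = "{length as - 1 | as. improving_seq n r m vars om as}"
  have Sb: "?S \<subseteq> {..r ^ (p * m)}" using improving_length[OF ms _ r] by fastforce
  then have fin: "finite ?S" using finite_subset by blast
  have eq: "max_iterations n r m vars om = Sup ?S" unfolding max_iterations_def by simp
  show "max_iterations n r m vars om \<le> r ^ (p * m)"
  proof (cases "?S = {}")
    case True then show ?thesis unfolding eq by (simp add: Sup_nat_def)
  next
    case False then show ?thesis unfolding eq using fin Sb cSup_eq_Max[OF fin False]
      by (metis (no_types, lifting) Max_in atMost_iff subsetD)
  qed
  assume t: "1 \<le> t"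
  show "t \<le> max_iterations n r m vars om \<longleftrightarrow>
          (\<exists>as\<in>Lset n r p m. improving_seq n r m vars om as \<and> t \<le> length as - 1)"
  proof
    assume h: "t \<le> max_iterations n r m vars om"
    have ne: "?S \<noteq> {}"
    proof
      assume "?S = {}"
      then have "Sup ?S = 0" by (simp add: Sup_nat_def)
      then show False using h t eq by simp
    qed
    have "Sup ?S \<in> ?S" using cSup_eq_Max[OF fin ne] Max_in[OF fin ne] by simp
    then obtain as where as: "improving_seq n r m vars om as" "Sup ?S = length as - 1" by auto
    have "as \<in> Lset n r p m" using as improving_length[OF ms as(1) r]
      unfolding Lset_def improving_seq_def by auto
    then show "\<exists>as\<in>Lset n r p m. improving_seq n r m vars om as \<and> t \<le> length as - 1"
      using as h eq by auto
  next
    assume "\<exists>as\<in>Lset n r p m. improving_seq n r m vars om as \<and> t \<le> length as - 1"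
    then obtain as where as: "improving_seq n r m vars om as" "t \<le> length as - 1" by auto
    have "length as - 1 \<le> Sup ?S"
      by (rule cSup_upper) (use as fin in \<open>auto intro: bdd_above_finite\<close>)
    then show "t \<le> max_iterations n r m vars om" using as eq by simp
  qed
qed

definition Cs :: "nat \<Rightarrow> (nat \<Rightarrow> nat list) \<Rightarrow> nat \<Rightarrow> nat set" where
  "Cs m vars j = {i. i < m \<and> j \<in> set (vars i)}"

definition Us :: "nat \<Rightarrow> (nat \<Rightarrow> nat list) \<Rightarrow> nat \<Rightarrow> nat set" where
  "Us m vars j = (\<Union>i\<in>Cs m vars j. set (vars i))"

definition G :: "nat \<Rightarrow> (nat \<Rightarrow> nat list) \<Rightarrow> nat \<times> (nat \<Rightarrow> nat) \<times> nat \<Rightarrow> (nat \<times> nat list \<Rightarrow> real) \<Rightarrow> real" where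
  "G m vars \<kappa> om = (\<Sum>i\<in>Cs m vars (fst \<kappa>).
      om (i, map ((fst (snd \<kappa>))(fst \<kappa> := snd (snd \<kappa>))) (vars i)) - om (i, map (fst (snd \<kappa>)) (vars i)))"

definition Keys :: "nat \<Rightarrow> nat \<Rightarrow> nat \<Rightarrow> (nat \<Rightarrow> nat list) \<Rightarrow> (nat \<times> (nat \<Rightarrow> nat) \<times> nat) set" where
  "Keys n m r vars = (SIGMA j:{0..<n}. ((\<lambda>a. restrict a (Us m vars j)) ` assignments n r \<times> {0..<r}))"

lemma finite_Cs: "finite (Cs m vars j)" unfolding Cs_def by simp

lemma gain_eq:
  assumes a: "a \<in> assignments n r" and b: "b \<in> assignments n r" and nb: "neighbour n a b"
  shows "\<exists>\<kappa>\<in>Keys n m r vars. weight m vars om b - weight m vars om a = G m vars \<kappa> om"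
proof -
  obtain j where j: "j < n" "\<And>l. l \<noteq> j \<Longrightarrow> a l = b l" using nb unfolding neighbour_def by blast
  let ?U = "Us m vars j"
  let ?a' = "restrict a ?U"
  define \<kappa> where "\<kappa> = (j, ?a', b j)"
  have bj: "b j \<in> {0..<r}" using b j(1) unfolding assignments_def by auto
  have im: "?a' \<in> (\<lambda>a. restrict a ?U) ` assignments n r" using a by (rule imageI)
  have p: "(?a', b j) \<in> (\<lambda>a. restrict a ?U) ` assignments n r \<times> {0..<r}" by (rule SigmaI[OF im bj])
  have key: "\<kappa> \<in> Keys n m r vars" unfolding \<kappa>_def Keys_def using j(1) p by (intro SigmaI[where B="\<lambda>j. (\<lambda>a. restrict a (Us m vars j)) ` assignments n r \<times> {0..<r}"]) simp_all
  have "weight m vars om b - weight m vars om a =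
      (\<Sum>i<m. om (i, map b (vars i)) - om (i, map a (vars i)))"
    unfolding weight_def by (simp add: sum_subtractf)
  also have "\<dots> = (\<Sum>i\<in>Cs m vars j. om (i, map b (vars i)) - om (i, map a (vars i)))"
  proof -
    have s1: "Cs m vars j \<subseteq> {..<m}" unfolding Cs_def by auto
    have s2: "\<forall>i\<in>{..<m} - Cs m vars j. om (i, map b (vars i)) - om (i, map a (vars i)) = 0"
    proof
      fix i assume "i \<in> {..<m} - Cs m vars j"
      then have "j \<notin> set (vars i)" unfolding Cs_def by auto
      then have "\<And>x. x \<in> set (vars i) \<Longrightarrow> b x = a x" using j(2) by force
      then have "map b (vars i) = map a (vars i)" by (rule map_cong[OF refl])
      then show "om (i, map b (vars i)) - om (i, map a (vars i)) = 0" by (simp del: map_eq_conv)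
    qed
    show ?thesis using sum.mono_neutral_right[OF _ s1 s2] by simp
  qed
  also have "\<dots> = G m vars \<kappa> om"
  proof -
    have "om (i, map b (vars i)) - om (i, map a (vars i)) =
        om (i, map (?a'(j := b j)) (vars i)) - om (i, map ?a' (vars i))" if i: "i \<in> Cs m vars j" for i
    proof -
      have s: "set (vars i) \<subseteq> ?U" using i unfolding Us_def by auto
      have "\<And>x. x \<in> set (vars i) \<Longrightarrow> b x = (?a'(j := b j)) x"
      proof -
        fix x assume x: "x \<in> set (vars i)"
        show "b x = (?a'(j := b j)) x"
        proof (cases "x = j")
          case False then show ?thesis using j(2)[of x] x s by auto
        qed simp
      qed
      then have e1: "map b (vars i) = map (?a'(j := b j)) (vars i)" by (rule map_cong[OF refl])
      have "\<And>x. x \<in> set (vars i) \<Longrightarrow> a x = ?a' x" using s by auto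
      then have e2: "map a (vars i) = map ?a' (vars i)" by (rule map_cong[OF refl])
      show ?thesis unfolding e1 e2 ..
    qed
    then show ?thesis unfolding G_def \<kappa>_def fst_conv snd_conv by (rule sum.cong[OF refl])
  qed
  finally show ?thesis using key by blast
qed

lemma card_Us: "mca_structure n m p q vars \<Longrightarrow> j < n \<Longrightarrow> card (Us m vars j) \<le> p * q"
proof -
  assume ms: "mca_structure n m p q vars" and j: "j < n"
  have "card (Us m vars j) \<le> (\<Sum>i\<in>Cs m vars j. card (set (vars i)))"
    unfolding Us_def by (rule card_UN_le) (rule finite_Cs)
  also have "\<dots> \<le> (\<Sum>i\<in>Cs m vars j. p)"
  proof (rule sum_mono)
    fix i assume "i \<in> Cs m vars j"
    then have "length (vars i) \<le> p" using ms unfolding mca_structure_def Cs_def by auto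
    then show "card (set (vars i)) \<le> p" using card_length le_trans by blast
  qed
  also have "\<dots> = card (Cs m vars j) * p" by simp
  also have "\<dots> \<le> q * p" using ms j unfolding mca_structure_def Cs_def by auto
  finally show ?thesis by (simp add: mult.commute)
qed

lemma finite_Us: "finite (Us m vars j)" unfolding Us_def using finite_Cs by auto

lemma card_Keys:
  assumes ms: "mca_structure n m p q vars" and r: "r \<ge> 1"
  shows "card (Keys n m r vars) \<le> n * r ^ (p * q + 1)"
proof -
  have cj: "card ((\<lambda>a. restrict a (Us m vars j)) ` assignments n r \<times> {0..<r}) \<le> r ^ (p * q + 1)"
    if j: "j < n" for j
  proof -
    have sub: "(\<lambda>a. restrict a (Us m vars j)) ` assignments n r \<subseteq> Us m vars j \<rightarrow>\<^sub>E {0..<r}"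
    proof
      fix x assume "x \<in> (\<lambda>a. restrict a (Us m vars j)) ` assignments n r"
      then obtain a where a: "a \<in> assignments n r" "x = restrict a (Us m vars j)" by auto
      have "Us m vars j \<subseteq> {0..<n}" using ms unfolding Us_def Cs_def mca_structure_def by auto
      then show "x \<in> Us m vars j \<rightarrow>\<^sub>E {0..<r}" using a unfolding assignments_def by auto
    qed
    have "card ((\<lambda>a. restrict a (Us m vars j)) ` assignments n r) \<le> card (Us m vars j \<rightarrow>\<^sub>E {0..<r})"
      by (rule card_mono[OF _ sub]) (simp add: finite_PiE finite_Us)
    also have "\<dots> = r ^ card (Us m vars j)" by (simp add: card_PiE finite_Us)
    also have "\<dots> \<le> r ^ (p * q)" using card_Us[OF ms j] r by (simp add: power_increasing)
    finally have "card ((\<lambda>a. restrict a (Us m vars j)) ` assignments n r) * r \<le> r ^ (p * q) * r"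
      by simp
    then show ?thesis by (simp add: card_cartesian_product)
  qed
  have fin: "finite ((\<lambda>a. restrict a (Us m vars j)) ` assignments n r \<times> {0..<r})" for j
    unfolding assignments_def by (simp add: finite_PiE)
  have "card (Keys n m r vars) = (\<Sum>j\<in>{0..<n}. card ((\<lambda>a. restrict a (Us m vars j)) ` assignments n r \<times> {0..<r}))"
    unfolding Keys_def by (rule card_SigmaI) (auto simp: fin)
  also have "\<dots> \<le> (\<Sum>j\<in>{0..<n}. r ^ (p * q + 1))" by (rule sum_mono) (use cj in auto)
  finally show ?thesis by simp
qed

definition Good :: "nat \<Rightarrow> nat \<Rightarrow> (nat \<Rightarrow> nat list) \<Rightarrow> (nat \<times> nat list \<Rightarrow> real) \<Rightarrow> bool" where
  "Good m r vars om \<longleftrightarrow> (\<forall>k\<in>value_index m r vars. om k \<in> {0..1})"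

lemma idx_in:
  assumes ms: "mca_structure n m p q vars" and a: "a \<in> assignments n r" and i: "i < m"
  shows "(i, map a (vars i)) \<in> value_index m r vars"
  using ms a i unfolding mca_structure_def assignments_def value_index_def by auto

lemma weight_bounds:
  assumes ms: "mca_structure n m p q vars" and a: "a \<in> assignments n r" and g: "Good m r vars om"
  shows "0 \<le> weight m vars om a" "weight m vars om a \<le> m"
proof -
  have b: "om (i, map a (vars i)) \<in> {0..1}" if "i < m" for i
    using g idx_in[OF ms a that] unfolding Good_def by blast
  show "0 \<le> weight m vars om a" unfolding weight_def by (rule sum_nonneg) (use b in auto)
  have "weight m vars om a \<le> (\<Sum>i<m. 1)" unfolding weight_def by (rule sum_mono) (use b in auto)
  then show "weight m vars om a \<le> m" by simp
qed

lemma small_gain: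
  assumes ms: "mca_structure n m p q vars" and g: "Good m r vars om"
    and imp: "improving_seq n r m vars om as" and t: "1 \<le> t" "t \<le> length as - 1"
  shows "\<exists>\<kappa>\<in>Keys n m r vars. 0 < G m vars \<kappa> om \<and> G m vars \<kappa> om \<le> real m / real t"
proof (rule ccontr)
  assume nc: "\<not> ?thesis"
  let ?w = "\<lambda>j. weight m vars om (as ! j)"
  define L where "L = length as - 1"
  have L: "t \<le> L" "L < length as" using t imp unfolding L_def improving_seq_def by auto
  have inA: "as ! j \<in> assignments n r" if "j < length as" for j
    using imp that unfolding improving_seq_def by (meson nth_mem subsetD)
  have big: "real m / real t < ?w (Suc j) - ?w j" if j: "j < L" for j
  proof -
    have "neighbour n (as ! j) (as ! Suc j)" "?w j < ?w (Suc j)"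
      using imp j unfolding improving_seq_def L_def by auto
    moreover obtain \<kappa> where "\<kappa> \<in> Keys n m r vars" "?w (Suc j) - ?w j = G m vars \<kappa> om"
      using gain_eq[OF inA[of j] inA[of "Suc j"], of m vars om] calculation j L by fastforce
    ultimately show ?thesis using nc by force
  qed
  have "(\<Sum>j<L. real m / real t) < (\<Sum>j<L. ?w (Suc j) - ?w j)"
    by (rule sum_strict_mono) (use big L t in \<open>auto simp: lessThan_empty_iff\<close>)
  also have "\<dots> = ?w L - ?w 0" by (rule sum_lessThan_telescope)
  also have "\<dots> \<le> m" using weight_bounds[OF ms inA g] L by fastforce
  finally have "real L * (real m / real t) < m" by simp
  moreover have "real t * (real m / real t) \<le> real L * (real m / real t)"
    using L by (intro mult_right_mono) auto
  moreover have "real t * (real m / real t) = m" using t by simp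
  ultimately show False by simp
qed

lemma bd_prob:
  assumes "bounded_density \<phi> g"
  shows "prob_space (density lborel (\<lambda>x. ennreal (g x)))"
proof (rule prob_spaceI)
  have m: "g \<in> borel_measurable lborel" using assms unfolding bounded_density_def by auto
  have "emeasure (density lborel (\<lambda>x. ennreal (g x))) UNIV = (\<integral>\<^sup>+ x. ennreal (g x) \<partial>lborel)"
    by (subst emeasure_density) (use m in auto)
  then show "emeasure (density lborel (\<lambda>x. ennreal (g x))) (space (density lborel (\<lambda>x. ennreal (g x)))) = 1"
    using assms unfolding bounded_density_def by simp
qed

lemma pi_bound:
  assumes P: "\<And>k. prob_space (M k)" and fin: "finite I" and k: "k \<in> I" and A: "A \<in> sets (PiM I M)"
    and bnd: "\<And>x. x \<in> space (PiM (I - {k}) M) \<Longrightarrow> (\<integral>\<^sup>+y. indicator A (x(k:=y)) \<partial>M k) \<le> B"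
  shows "emeasure (PiM I M) A \<le> B"
proof -
  interpret product_sigma_finite M
    unfolding product_sigma_finite_def using P prob_space_imp_sigma_finite by blast
  interpret P: prob_space "PiM (I-{k}) M" by (rule prob_space_PiM) (use P in auto)
  have I: "insert k (I - {k}) = I" using k by auto
  have "emeasure (PiM I M) A = (\<integral>\<^sup>+x. indicator A x \<partial>PiM I M)" using A by simp
  also have "\<dots> = (\<integral>\<^sup>+x. (\<integral>\<^sup>+y. indicator A (x(k:=y)) \<partial>M k) \<partial>PiM (I-{k}) M)"
    using product_nn_integral_insert[of "I-{k}" k "indicator A"] I A fin by simp
  also have "\<dots> \<le> (\<integral>\<^sup>+x. B \<partial>PiM (I-{k}) M)" by (rule nn_integral_mono) (use bnd in auto)
  also have "\<dots> = B" by (simp add: P.emeasure_space_1)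
  finally show ?thesis .
qed

definition Mk :: "nat \<Rightarrow> nat \<Rightarrow> (nat \<Rightarrow> nat list) \<Rightarrow> (nat \<Rightarrow> nat list \<Rightarrow> real \<Rightarrow> real) \<Rightarrow> nat \<times> nat list \<Rightarrow> real measure" where
  "Mk m r vars f k = (if k \<in> value_index m r vars then density lborel (\<lambda>x. ennreal (f (fst k) (snd k) x))
      else return lborel 0)"

lemma finite_value_index: "finite (value_index m r vars)"
proof -
  have "value_index m r vars \<subseteq> (SIGMA i:{..<m}. {v. set v \<subseteq> {0..<r} \<and> length v = length (vars i)})"
    unfolding value_index_def by auto
  moreover have "finite (SIGMA i:{..<m}. {v. set v \<subseteq> {0..<r} \<and> length v = length (vars i)})"
    by (intro finite_SigmaI finite_lists_length_eq) auto
  ultimately show ?thesis by (rule finite_subset)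
qed

lemma VS_eq: "value_space m r vars f = PiM (value_index m r vars) (Mk m r vars f)"
  unfolding value_space_def Mk_def by (rule PiM_cong) auto

lemma Mk_prob:
  assumes hb: "\<forall>(i, v) \<in> value_index m r vars. bounded_density \<phi> (f i v)"
  shows "prob_space (Mk m r vars f k)"
  using hb bd_prob unfolding Mk_def by (auto intro: prob_space_return)

lemma sets_Mk: "sets (Mk m r vars f k) = sets borel"
  unfolding Mk_def by auto

lemma comp_meas:
  assumes "k \<in> value_index m r vars"
  shows "(\<lambda>om. om k) \<in> borel_measurable (PiM (value_index m r vars) (Mk m r vars f))"
proof -
  have "(\<lambda>om. om k) \<in> measurable (PiM (value_index m r vars) (Mk m r vars f)) (Mk m r vars f k)"
    by (rule measurable_component_singleton[OF assms])
  then show ?thesis using measurable_cong_sets[OF refl sets_Mk] by blast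
qed

lemma key_idx:
  assumes ms: "mca_structure n m p q vars" and k: "\<kappa> \<in> Keys n m r vars" and i: "i \<in> Cs m vars (fst \<kappa>)"
  shows "(i, map (fst (snd \<kappa>)) (vars i)) \<in> value_index m r vars"
    "(i, map ((fst (snd \<kappa>))(fst \<kappa> := snd (snd \<kappa>))) (vars i)) \<in> value_index m r vars"
proof -
  obtain j a y where kj: "\<kappa> = (j, restrict a (Us m vars j), y)" "j < n" "a \<in> assignments n r" "y < r"
    using k unfolding Keys_def by auto
  have s: "set (vars i) \<subseteq> Us m vars j" using i kj(1) unfolding Us_def by auto
  have im: "i < m" using i unfolding Cs_def by auto
  have vs: "set (vars i) \<subseteq> {0..<n}" using ms im unfolding mca_structure_def by auto
  have av: "a l < r" if "l \<in> set (vars i)" for l using kj(3) vs that unfolding assignments_def by auto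
  show "(i, map (fst (snd \<kappa>)) (vars i)) \<in> value_index m r vars"
    unfolding value_index_def using kj(1) im s av by auto
  show "(i, map ((fst (snd \<kappa>))(fst \<kappa> := snd (snd \<kappa>))) (vars i)) \<in> value_index m r vars"
    unfolding value_index_def using kj(1,4) im s av by auto
qed

lemma G_meas:
  assumes ms: "mca_structure n m p q vars" and k: "\<kappa> \<in> Keys n m r vars"
  shows "G m vars \<kappa> \<in> borel_measurable (PiM (value_index m r vars) (Mk m r vars f))"
  unfolding G_def
  by (intro borel_measurable_sum borel_measurable_diff comp_meas key_idx[OF ms k])

lemma G_upd:
  assumes i0: "i0 \<in> Cs m vars j" and y: "y \<noteq> a' j"
  shows "G m vars (j, a', y) (om((i0, map (a'(j := y)) (vars i0)) := z))
       = G m vars (j, a', y) om + z - om (i0, map (a'(j := y)) (vars i0))"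
proof -
  let ?k = "(i0, map (a'(j := y)) (vars i0))"
  let ?t = "\<lambda>w i. w (i, map (a'(j := y)) (vars i)) - w (i, map a' (vars i))"
  have ne: "map a' (vars i0) \<noteq> map (a'(j := y)) (vars i0)"
  proof
    assume "map a' (vars i0) = map (a'(j := y)) (vars i0)"
    moreover have "j \<in> set (vars i0)" using i0 unfolding Cs_def by auto
    ultimately have "a' j = (a'(j := y)) j" by (metis map_eq_conv)
    then show False using y by simp
  qed
  have rest: "(\<Sum>i\<in>Cs m vars j - {i0}. ?t (om(?k := z)) i) = (\<Sum>i\<in>Cs m vars j - {i0}. ?t om i)"
    by (rule sum.cong) auto
  have "G m vars (j, a', y) (om(?k := z)) = ?t (om(?k := z)) i0 + (\<Sum>i\<in>Cs m vars j - {i0}. ?t (om(?k := z)) i)"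
    unfolding G_def fst_conv snd_conv by (rule sum.remove[OF finite_Cs i0])
  also have "\<dots> = (z - om (i0, map a' (vars i0))) + (\<Sum>i\<in>Cs m vars j - {i0}. ?t om i)"
  proof -
    have ne2: "(i0, map a' (vars i0)) \<noteq> ?k" using ne by (metis prod.inject)
    have h1: "(om(?k := z)) ?k = z" by simp
    have h2: "(om(?k := z)) (i0, map a' (vars i0)) = om (i0, map a' (vars i0))"
      by (rule fun_upd_other[OF ne2])
    show ?thesis by (simp only: h1 h2 rest)
  qed
  also have "G m vars (j, a', y) om = ?t om i0 + (\<Sum>i\<in>Cs m vars j - {i0}. ?t om i)"
    unfolding G_def fst_conv snd_conv by (rule sum.remove[OF finite_Cs i0])
  ultimately show ?thesis by simp
qed

lemma dens_facts:
  assumes hb: "\<forall>(i, v) \<in> value_index m r vars. bounded_density \<phi> (f i v)" and k: "k \<in> value_index m r vars"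
  shows "Mk m r vars f k = density lborel (\<lambda>x. ennreal (f (fst k) (snd k) x))"
    "f (fst k) (snd k) \<in> borel_measurable lborel"
    "\<And>x. f (fst k) (snd k) x \<le> \<phi>" "\<And>x. 0 \<le> f (fst k) (snd k) x"
    "\<And>x. x \<notin> {0..1} \<Longrightarrow> f (fst k) (snd k) x = 0"
  using hb k unfolding Mk_def bounded_density_def by auto

lemma upd_space:
  assumes "k0 \<in> I" "x \<in> space (PiM (I - {k0}) M)" "space (M k0) = UNIV"
  shows "x(k0 := z) \<in> space (PiM I M)"
  using assms unfolding space_PiM PiE_def extensional_def Pi_def by auto

lemma ev_bound:
  assumes ms: "mca_structure n m p q vars"
    and hb: "\<forall>(i, v) \<in> value_index m r vars. bounded_density \<phi> (f i v)"
    and k: "\<kappa> \<in> Keys n m r vars" and eps: "0 \<le> \<epsilon>" and phi: "0 \<le> \<phi>"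
  shows "emeasure (PiM (value_index m r vars) (Mk m r vars f))
           {om \<in> space (PiM (value_index m r vars) (Mk m r vars f)). 0 < G m vars \<kappa> om \<and> G m vars \<kappa> om \<le> \<epsilon>}
         \<le> ennreal (\<epsilon> * \<phi>)"
proof -
  let ?I = "value_index m r vars"
  let ?P = "PiM ?I (Mk m r vars f)"
  let ?A = "{om \<in> space ?P. 0 < G m vars \<kappa> om \<and> G m vars \<kappa> om \<le> \<epsilon>}"
  have [measurable]: "G m vars \<kappa> \<in> borel_measurable ?P" by (rule G_meas[OF ms k])
  have Am: "?A \<in> sets ?P" by measurable
  obtain j a' y where kj: "\<kappa> = (j, a', y)" by (metis prod.exhaust)
  show ?thesis
  proof (cases "Cs m vars j = {} \<or> y = a' j")
    case True
    then have "G m vars \<kappa> om = 0" for om unfolding G_def kj by auto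
    then have Ae: "?A = {}" by auto
    show ?thesis by (simp only: Ae) simp
  next
    case False
    then obtain i0 where i0: "i0 \<in> Cs m vars j" and y: "y \<noteq> a' j" by auto
    define k0 where "k0 = (i0, map (a'(j := y)) (vars i0))"
    have k0: "k0 \<in> ?I" using key_idx(2)[OF ms k, of i0] i0 kj unfolding k0_def by simp
    note df = dens_facts[OF hb k0]
    show ?thesis
    proof (rule pi_bound[OF Mk_prob[OF hb] finite_value_index k0 Am])
      fix x assume x: "x \<in> space (PiM (?I - {k0}) (Mk m r vars f))"
      define c where "c = G m vars \<kappa> x - x k0"
      have ind: "indicator ?A (x(k0 := z)) = (indicator {-c <.. \<epsilon> - c} z :: ennreal)" for z
      proof -
        have sp: "x(k0 := z) \<in> space ?P"
          by (rule upd_space[OF k0 x]) (simp add: df(1))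
        have "G m vars \<kappa> (x(k0 := z)) = z + c"
          unfolding kj c_def k0_def using G_upd[of i0 m vars j y a', OF i0 y] by (simp add: kj)
        then show ?thesis using sp by (auto simp: indicator_def)
      qed
      have "(\<integral>\<^sup>+z. indicator ?A (x(k0 := z)) \<partial>Mk m r vars f k0)
          = (\<integral>\<^sup>+z. indicator {-c <.. \<epsilon> - c} z \<partial>density lborel (\<lambda>x. ennreal (f (fst k0) (snd k0) x)))"
        unfolding ind df(1) ..
      also have "\<dots> = (\<integral>\<^sup>+z. ennreal (f (fst k0) (snd k0) z) * indicator {-c <.. \<epsilon> - c} z \<partial>lborel)"
        by (rule nn_integral_density) (use df(2) in auto)
      also have "\<dots> \<le> (\<integral>\<^sup>+z. ennreal \<phi> * indicator {-c <.. \<epsilon> - c} z \<partial>lborel)"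
        by (rule nn_integral_mono) (auto intro!: mult_right_mono ennreal_leI df(3) split: split_indicator)
      also have "\<dots> = ennreal \<phi> * emeasure lborel {-c <.. \<epsilon> - c}"
        by (subst nn_integral_cmult) auto
      also have "\<dots> = ennreal (\<epsilon> * \<phi>)" using eps phi by (simp add: ennreal_mult' mult.commute)
      finally show "(\<integral>\<^sup>+z. indicator ?A (x(k0 := z)) \<partial>Mk m r vars f k0) \<le> ennreal (\<epsilon> * \<phi>)" .
    qed
  qed
qed

lemma bad_bound:
  assumes hb: "\<forall>(i, v) \<in> value_index m r vars. bounded_density \<phi> (f i v)"
    and k0: "k0 \<in> value_index m r vars"
  shows "emeasure (PiM (value_index m r vars) (Mk m r vars f))
           {om \<in> space (PiM (value_index m r vars) (Mk m r vars f)). om k0 \<notin> {0..1}} \<le> 0"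
proof -
  let ?I = "value_index m r vars"
  let ?P = "PiM ?I (Mk m r vars f)"
  let ?A = "{om \<in> space ?P. om k0 \<notin> {0..1}}"
  have [measurable]: "(\<lambda>om. om k0) \<in> borel_measurable ?P" by (rule comp_meas[OF k0])
  have Am: "?A \<in> sets ?P" by measurable
  note df = dens_facts[OF hb k0]
  show ?thesis
  proof (rule pi_bound[OF Mk_prob[OF hb] finite_value_index k0 Am])
    fix x assume x: "x \<in> space (PiM (?I - {k0}) (Mk m r vars f))"
    have ind: "indicator ?A (x(k0 := z)) = (indicator (- {0..1}) z :: ennreal)" for z
    proof -
      have sp: "x(k0 := z) \<in> space ?P"
        by (rule upd_space[OF k0 x]) (simp add: df(1))
      then show ?thesis by (auto simp: indicator_def)
    qed
    have "(\<integral>\<^sup>+z. indicator ?A (x(k0 := z)) \<partial>Mk m r vars f k0)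
        = (\<integral>\<^sup>+z. indicator (- {0..1}) z \<partial>density lborel (\<lambda>x. ennreal (f (fst k0) (snd k0) x)))"
      unfolding ind df(1) ..
    also have "\<dots> = (\<integral>\<^sup>+z. ennreal (f (fst k0) (snd k0) z) * indicator (- {0..1}) z \<partial>lborel)"
      by (rule nn_integral_density) (use df(2) in auto)
    also have "\<dots> = 0"
    proof -
      have z: "\<And>z. ennreal (f (fst k0) (snd k0) z) * indicator (- {0..1}) z = 0"
        by (auto simp: df(5) split: split_indicator)
      show ?thesis by (simp add: z)
    qed
    finally show "(\<integral>\<^sup>+z. indicator ?A (x(k0 := z)) \<partial>Mk m r vars f k0) \<le> 0" by simp
  qed
qed

lemma harm_le_ln: "n \<ge> 1 \<Longrightarrow> harm n \<le> 1 + ln (real n)"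
proof -
  assume n: "n \<ge> 1"
  then obtain k where k: "n = Suc k" by (cases n) auto
  have "harm (Suc k) - ln (real (Suc k)) \<le> harm (Suc 0) - ln (real (Suc 0))"
    using decseq_harm_diff_ln unfolding decseq_def by blast
  then show ?thesis using k by (simp add: harm_def)
qed

lemma p_le_pow: "(r::nat) \<ge> 2 \<Longrightarrow> p \<le> r ^ p"
proof -
  assume r: "r \<ge> 2"
  have "p < 2 ^ p" by (rule less_exp)
  also have "(2::nat) ^ p \<le> r ^ p" using r by (rule power_mono) simp
  finally show ?thesis by simp
qed

lemma final_ineq:
  fixes K n m p q r :: nat and \<phi> :: real
  assumes r: "r \<ge> 2" and m: "m \<ge> 1" and phi: "\<phi> \<ge> 0" and K: "K \<le> n * r ^ (p * q + 1)"
  shows "real K * real m * \<phi> * harm (r ^ (p * m)) \<le> 2 * real r ^ (2 * p * (q + 1) + 2) * real n * real m ^ 2 * \<phi>"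
proof -
  have r1: "real r \<ge> 1" using r by simp
  have "harm (r ^ (p * m)) \<le> 1 + ln (real (r ^ (p * m)))"
    by (rule harm_le_ln) (use r in simp)
  also have "ln (real (r ^ (p * m))) = real p * real m * ln (real r)"
    using r by (simp add: ln_realpow)
  also have "ln (real r) \<le> real r" using r by (intro ln_le_minus_one[THEN order_trans]) auto
  then have "real p * real m * ln (real r) \<le> real p * real m * real r"
    by (intro mult_left_mono) auto
  finally have H: "harm (r ^ (p * m)) \<le> 1 + real p * real m * real r" by simp
  have pr: "real p * real r \<le> real r ^ (p + 1)"
  proof -
    have "real p \<le> real r ^ p" using p_le_pow[OF r, of p] by (metis of_nat_le_iff of_nat_power)
    then show ?thesis using r by (simp add: mult_right_mono)
  qed
  have one: "1 \<le> real r ^ (p + 1)" using r1 by (rule one_le_power)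
  have H2: "harm (r ^ (p * m)) \<le> 2 * real m * real r ^ (p + 1)"
  proof -
    have "1 + real p * real m * real r \<le> real m + real m * (real p * real r)" using m by simp
    also have "\<dots> \<le> real m * real r ^ (p + 1) + real m * real r ^ (p + 1)"
      using one pr m by (intro add_mono mult_left_mono) auto
    finally show ?thesis using H by simp
  qed
  have hn: "0 \<le> (harm (r ^ (p * m)) :: real)" by (rule harm_nonneg)
  have KK: "real K \<le> real n * real r ^ (p * q + 1)" using K by (metis of_nat_le_iff of_nat_mult of_nat_power)
  have "real K * real m * \<phi> * harm (r ^ (p * m)) \<le> (real n * real r ^ (p * q + 1)) * real m * \<phi> * (2 * real m * real r ^ (p + 1))"
    using KK H2 hn phi by (intro mult_mono) (auto intro: mult_nonneg_nonneg)
  also have "\<dots> = 2 * real r ^ (p * q + 1 + (p + 1)) * real n * real m ^ 2 * \<phi>"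
    by (simp add: power_add power2_eq_square algebra_simps)
  also have "\<dots> \<le> 2 * real r ^ (2 * p * (q + 1) + 2) * real n * real m ^ 2 * \<phi>"
  proof -
    have "real r ^ (p * q + 1 + (p + 1)) \<le> real r ^ (2 * p * (q + 1) + 2)"
      using r1 by (intro power_increasing) (auto simp: algebra_simps)
    then show ?thesis using phi by (intro mult_right_mono) auto
  qed
  finally show ?thesis .
qed

lemma wmeas:
  assumes ms: "mca_structure n m p q vars" and a: "a \<in> assignments n r"
  shows "(\<lambda>om. weight m vars om a) \<in> borel_measurable (PiM (value_index m r vars) (Mk m r vars f))"
  unfolding weight_def by (intro borel_measurable_sum comp_meas idx_in[OF ms a]) simp

lemma impset:
  assumes ms: "mca_structure n m p q vars" and as: "as \<in> Lset n r p m"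
  shows "{om \<in> space (PiM (value_index m r vars) (Mk m r vars f)). improving_seq n r m vars om as}
         \<in> sets (PiM (value_index m r vars) (Mk m r vars f))"
proof -
  let ?P = "PiM (value_index m r vars) (Mk m r vars f)"
  define L where "L = length as - 1"
  define Q where "Q = (as \<noteq> [] \<and> set as \<subseteq> assignments n r \<and> (\<forall>j<L. neighbour n (as ! j) (as ! Suc j)))"
  have sa: "set as \<subseteq> assignments n r" using as unfolding Lset_def by auto
  have iff: "improving_seq n r m vars om as \<longleftrightarrow>
      Q \<and> (\<forall>j\<in>{..<L}. weight m vars om (as ! j) < weight m vars om (as ! Suc j))" for om
    unfolding improving_seq_def Q_def L_def by (auto simp: less_diff_conv)
  have inA: "as ! j \<in> assignments n r" if "j < length as" for j
    using sa that by (meson nth_mem subsetD)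
  have all: "{om \<in> space ?P. \<forall>j\<in>{..<L}. weight m vars om (as ! j) < weight m vars om (as ! Suc j)} \<in> sets ?P"
  proof (rule sets.sets_Collect_finite_All)
    fix j assume j: "j \<in> {..<L}"
    then have "j < length as" "Suc j < length as" unfolding L_def by auto
    then show "{om \<in> space ?P. weight m vars om (as ! j) < weight m vars om (as ! Suc j)} \<in> sets ?P"
      by (intro borel_measurable_less wmeas[OF ms] inA)
  qed simp
  show ?thesis
  proof (cases Q)
    case True
    then show ?thesis using all unfolding iff by simp
  next
    case False
    then show ?thesis unfolding iff by simp
  qed
qed

lemma main_case:
  assumes ms: "mca_structure n m p q vars"
    and hb: "\<forall>(i, v) \<in> value_index m r vars. bounded_density \<phi> (f i v)"
    and r: "r \<ge> 2" and n: "n \<ge> 1" and m: "m \<ge> 1"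
  shows "(\<lambda>om. real (max_iterations n r m vars om)) \<in> borel_measurable (value_space m r vars f) \<and>
       (\<integral>\<^sup>+ om. ennreal (real (max_iterations n r m vars om)) \<partial>value_space m r vars f)
         \<le> ennreal (2 * real r ^ (2 * p * (q + 1) + 2) * real n * real m ^ 2 * \<phi>)"
proof -
  let ?I = "value_index m r vars"
  let ?P = "PiM ?I (Mk m r vars f)"
  let ?T = "\<lambda>om. max_iterations n r m vars om"
  define Tm where "Tm = r ^ (p * m)"
  have r1: "r \<ge> 1" using r by simp
  have phi: "0 \<le> \<phi>"
  proof -
    define k0 where "k0 = (0::nat, replicate (length (vars 0)) (0::nat))"
    have k0: "k0 \<in> ?I" unfolding k0_def value_index_def using m r by auto
    show ?thesis using dens_facts(3,4)[OF hb k0, of 0] by linarith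
  qed
  define E where "E t = {om \<in> space ?P. t \<le> ?T om}" for t
  have E_eq: "E t = {om \<in> space ?P. \<exists>as\<in>Lset n r p m \<inter> {as. t \<le> length as - 1}. improving_seq n r m vars om as}"
    if t: "t \<ge> 1" for t
    unfolding E_def using maxit_facts(2)[OF ms r1 t] by auto
  have E_sets: "E t \<in> sets ?P" if t: "t \<ge> 1" for t
    unfolding E_eq[OF t]
  proof (rule sets.sets_Collect_finite_Ex)
    show "finite (Lset n r p m \<inter> {as. t \<le> length as - 1})" using finite_Lset by simp
    fix as assume "as \<in> Lset n r p m \<inter> {as. t \<le> length as - 1}"
    then show "{om \<in> space ?P. improving_seq n r m vars om as} \<in> sets ?P"
      using impset[OF ms] by auto
  qed
  have T_sum: "real (?T om) = (\<Sum>t\<in>{1..Tm}. indicator (E t) om)" if om: "om \<in> space ?P" for om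
  proof -
    have le: "?T om \<le> Tm" unfolding Tm_def by (rule maxit_facts(1)[OF ms r1])
    have "(\<Sum>t\<in>{1..Tm}. indicator (E t) om) = (\<Sum>t\<in>{1..Tm}. if t \<in> {..?T om} then 1 else (0::real))"
      by (rule sum.cong) (auto simp: E_def om indicator_def)
    also have "\<dots> = (\<Sum>t\<in>{1..Tm} \<inter> {..?T om}. 1)" by (rule sum.inter_restrict[symmetric]) simp
    also have "{1..Tm} \<inter> {..?T om} = {1..?T om}" using le by auto
    finally show ?thesis by simp
  qed
  have meas_sum: "(\<lambda>om. (\<Sum>t\<in>{1..Tm}. indicator (E t) om :: real)) \<in> borel_measurable ?P"
    by (intro borel_measurable_sum borel_measurable_indicator E_sets) simp
  have meas: "(\<lambda>om. real (?T om)) \<in> borel_measurable ?P"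
    using meas_sum by (subst measurable_cong[OF T_sum]) auto
  define K where "K = card (Keys n m r vars)"
  have finK: "finite (Keys n m r vars)"
    unfolding Keys_def assignments_def by (intro finite_SigmaI finite_cartesian_product finite_imageI) (auto simp: finite_PiE)
  define Bad where "Bad = (\<Union>k\<in>?I. {om \<in> space ?P. om k \<notin> {0..1}})"
  define Ev where "Ev \<epsilon> \<kappa> = {om \<in> space ?P. 0 < G m vars \<kappa> om \<and> G m vars \<kappa> om \<le> \<epsilon>}" for \<epsilon> \<kappa>
  have Bad_sets: "(\<lambda>k. {om \<in> space ?P. om k \<notin> {0..1}}) ` ?I \<subseteq> sets ?P"
  proof -
    have "{om \<in> space ?P. om k \<notin> {0..1}} \<in> sets ?P" if k: "k \<in> ?I" for k
    proof -
      have [measurable]: "(\<lambda>om. om k) \<in> borel_measurable ?P" by (rule comp_meas[OF k])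
      show ?thesis by measurable
    qed
    then show ?thesis by auto
  qed
  have Ev_sets: "Ev \<epsilon> ` Keys n m r vars \<subseteq> sets ?P" for \<epsilon>
  proof -
    have "Ev \<epsilon> \<kappa> \<in> sets ?P" if k: "\<kappa> \<in> Keys n m r vars" for \<kappa>
    proof -
      have [measurable]: "G m vars \<kappa> \<in> borel_measurable ?P" by (rule G_meas[OF ms k])
      show ?thesis unfolding Ev_def by measurable
    qed
    then show ?thesis by auto
  qed
  have Bad0: "emeasure ?P Bad \<le> 0"
  proof -
    have "emeasure ?P Bad \<le> (\<Sum>k\<in>?I. emeasure ?P {om \<in> space ?P. om k \<notin> {0..1}})"
      unfolding Bad_def by (rule emeasure_subadditive_finite[OF finite_value_index Bad_sets])
    also have "\<dots> \<le> (\<Sum>k\<in>?I. 0)" by (rule sum_mono) (rule bad_bound[OF hb])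
    finally show ?thesis by simp
  qed
  have Et_bound: "emeasure ?P (E t) \<le> ennreal (real K * (real m / real t * \<phi>))" if t: "t \<ge> 1" for t
  proof -
    have sub: "E t \<subseteq> Bad \<union> (\<Union>\<kappa>\<in>Keys n m r vars. Ev (real m / real t) \<kappa>)"
    proof
      fix om assume om: "om \<in> E t"
      then have oms: "om \<in> space ?P" unfolding E_def by auto
      show "om \<in> Bad \<union> (\<Union>\<kappa>\<in>Keys n m r vars. Ev (real m / real t) \<kappa>)"
      proof (cases "Good m r vars om")
        case False
        then show ?thesis using oms unfolding Good_def Bad_def by auto
      next
        case True
        obtain as where as: "as \<in> Lset n r p m" "improving_seq n r m vars om as" "t \<le> length as - 1"
          using om unfolding E_eq[OF t] by auto
        obtain \<kappa> where "\<kappa> \<in> Keys n m r vars" "0 < G m vars \<kappa> om" "G m vars \<kappa> om \<le> real m / real t"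
          using small_gain[OF ms True as(2) t as(3)] by auto
        then show ?thesis using oms unfolding Ev_def by auto
      qed
    qed
    have U: "(\<Union>\<kappa>\<in>Keys n m r vars. Ev (real m / real t) \<kappa>) \<in> sets ?P"
      using Ev_sets finK by auto
    have B: "Bad \<in> sets ?P" unfolding Bad_def using Bad_sets finite_value_index by auto
    have "emeasure ?P (E t) \<le> emeasure ?P (Bad \<union> (\<Union>\<kappa>\<in>Keys n m r vars. Ev (real m / real t) \<kappa>))"
      by (rule emeasure_mono[OF sub]) (use U B in auto)
    also have "\<dots> \<le> emeasure ?P Bad + emeasure ?P (\<Union>\<kappa>\<in>Keys n m r vars. Ev (real m / real t) \<kappa>)"
      by (rule emeasure_subadditive[OF B U])
    also have "\<dots> \<le> 0 + (\<Sum>\<kappa>\<in>Keys n m r vars. emeasure ?P (Ev (real m / real t) \<kappa>))"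
      by (intro add_mono Bad0 emeasure_subadditive_finite[OF finK Ev_sets])
    also have "\<dots> \<le> 0 + (\<Sum>\<kappa>\<in>Keys n m r vars. ennreal (real m / real t * \<phi>))"
      by (intro add_mono order.refl sum_mono) (unfold Ev_def, rule ev_bound[OF ms hb _ _ phi], auto)
    also have "\<dots> = ennreal (real K * (real m / real t * \<phi>))"
      using phi by (simp add: K_def ennreal_of_nat_eq_real_of_nat ennreal_mult'[symmetric])
    finally show ?thesis .
  qed
  have "(\<integral>\<^sup>+ om. ennreal (real (?T om)) \<partial>?P) = (\<integral>\<^sup>+ om. (\<Sum>t\<in>{1..Tm}. indicator (E t) om) \<partial>?P)"
  proof (rule nn_integral_cong)
    fix om assume om: "om \<in> space ?P"
    have "ennreal (real (?T om)) = ennreal (\<Sum>t\<in>{1..Tm}. indicator (E t) om)" by (simp only: T_sum[OF om])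
    also have "\<dots> = (\<Sum>t\<in>{1..Tm}. ennreal (indicator (E t) om))" by (rule sum_ennreal[symmetric]) simp
    also have "\<dots> = (\<Sum>t\<in>{1..Tm}. indicator (E t) om)" by (simp add: ennreal_indicator)
    finally show "ennreal (real (?T om)) = (\<Sum>t\<in>{1..Tm}. indicator (E t) om)" .
  qed
  also have "\<dots> = (\<Sum>t\<in>{1..Tm}. emeasure ?P (E t))"
  proof -
    have "(\<integral>\<^sup>+ om. (\<Sum>t\<in>{1..Tm}. indicator (E t) om) \<partial>?P) = (\<Sum>t\<in>{1..Tm}. (\<integral>\<^sup>+ om. indicator (E t) om \<partial>?P))"
      by (rule nn_integral_sum) (auto intro!: borel_measurable_indicator E_sets)
    also have "\<dots> = (\<Sum>t\<in>{1..Tm}. emeasure ?P (E t))"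
      by (rule sum.cong[OF refl]) (rule nn_integral_indicator, rule E_sets, simp)
    finally show ?thesis .
  qed
  also have "\<dots> \<le> (\<Sum>t\<in>{1..Tm}. ennreal (real K * (real m / real t * \<phi>)))"
    by (rule sum_mono) (rule Et_bound, simp)
  also have "\<dots> = ennreal (\<Sum>t\<in>{1..Tm}. real K * (real m / real t * \<phi>))"
    by (rule sum_ennreal) (use phi in auto)
  also have "(\<Sum>t\<in>{1..Tm}. real K * (real m / real t * \<phi>)) = real K * real m * \<phi> * harm Tm"
    unfolding harm_def by (simp add: sum_distrib_left sum_distrib_right field_simps)
  also have "\<dots> \<le> 2 * real r ^ (2 * p * (q + 1) + 2) * real n * real m ^ 2 * \<phi>"
    unfolding Tm_def by (rule final_ineq[OF r m phi]) (unfold K_def, rule card_Keys[OF ms r1])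
  finally have int: "(\<integral>\<^sup>+ om. ennreal (real (?T om)) \<partial>?P) \<le> ennreal (2 * real r ^ (2 * p * (q + 1) + 2) * real n * real m ^ 2 * \<phi>)"
    by (simp add: ennreal_leI)
  show ?thesis unfolding VS_eq using meas int by simp
qed

lemma triv_len:
  assumes c: "\<not> (r \<ge> 2 \<and> n \<ge> 1 \<and> m \<ge> 1)" and imp: "improving_seq n r m vars om as"
  shows "length as \<le> 1"
proof (rule ccontr)
  assume "\<not> length as \<le> 1"
  then have l: "Suc 0 < length as" by simp
  let ?a = "as ! 0" and ?b = "as ! Suc 0"
  have nb: "neighbour n ?a ?b" and w: "weight m vars om ?a < weight m vars om ?b"
    using imp l unfolding improving_seq_def by auto
  have sa: "set as \<subseteq> assignments n r" using imp unfolding improving_seq_def by auto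
  have "?a \<in> set as" "?b \<in> set as" using l by (auto intro!: nth_mem)
  then have a: "?a \<in> assignments n r" and b: "?b \<in> assignments n r" using sa by auto
  show False
  proof (cases "m = 0")
    case True then show False using w unfolding weight_def by simp
  next
    case False
    then have rn: "r \<le> 1 \<or> n = 0" using c by auto
    have "?a = ?b"
    proof
      fix l show "?a l = ?b l"
      proof (cases "l < n")
        case True
        then have "?a l \<in> {0..<r}" "?b l \<in> {0..<r}" using a b unfolding assignments_def by auto
        then show ?thesis using rn True by auto
      next
        case False
        then show ?thesis using a b unfolding assignments_def PiE_def extensional_def by auto
      qed
    qed
    then show False using nb unfolding neighbour_def by simp
  qed
qed

lemma triv_case:
  assumes c: "\<not> (r \<ge> 2 \<and> n \<ge> 1 \<and> m \<ge> 1)"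
  shows "max_iterations n r m vars om = 0"
proof -
  let ?S = "{length as - 1 | as. improving_seq n r m vars om as}"
  have S: "?S \<subseteq> {0}"
  proof
    fix x assume "x \<in> ?S"
    then obtain as where "x = length as - 1" "improving_seq n r m vars om as" by blast
    then show "x \<in> {0}" using triv_len[OF c, of vars om as] by simp
  qed
  have eq: "max_iterations n r m vars om = Sup ?S" unfolding max_iterations_def by (rule refl)
  show ?thesis
  proof (cases "?S = {}")
    case True
    show ?thesis unfolding eq by (simp only: True) (simp add: Sup_nat_def)
  next
    case False
    have S0: "?S = {0}" using subset_singletonD[OF S] False by metis
    show ?thesis unfolding eq by (simp only: S0) simp
  qed
qed

theorem mainTheorem19:
  shows "\<exists>c::real. \<forall>(n::nat) (m::nat) (p::nat) (q::nat) (r::nat) (\<phi>::real)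
            (vars :: nat \<Rightarrow> nat list) (f :: nat \<Rightarrow> nat list \<Rightarrow> real \<Rightarrow> real).
     mca_structure n m p q vars \<and>
     (\<forall>(i, v) \<in> value_index m r vars. bounded_density \<phi> (f i v)) \<longrightarrow>
       (\<lambda>om. real (max_iterations n r m vars om)) \<in> borel_measurable (value_space m r vars f) \<and>
       (\<integral>\<^sup>+ om. ennreal (real (max_iterations n r m vars om)) \<partial>value_space m r vars f)
         \<le> ennreal (c * real r ^ (2 * p * (q + 1) + 2) * real n * real m ^ 2 * \<phi>)"
proof (rule exI[of _ 2], intro allI impI, elim conjE)
  fix n m p q r :: nat and \<phi> :: real and vars :: "nat \<Rightarrow> nat list" and f :: "nat \<Rightarrow> nat list \<Rightarrow> real \<Rightarrow> real"
  assume ms: "mca_structure n m p q vars" and hb: "\<forall>(i, v) \<in> value_index m r vars. bounded_density \<phi> (f i v)"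
  show "(\<lambda>om. real (max_iterations n r m vars om)) \<in> borel_measurable (value_space m r vars f) \<and>
       (\<integral>\<^sup>+ om. ennreal (real (max_iterations n r m vars om)) \<partial>value_space m r vars f)
         \<le> ennreal (2 * real r ^ (2 * p * (q + 1) + 2) * real n * real m ^ 2 * \<phi>)"
  proof (cases "r \<ge> 2 \<and> n \<ge> 1 \<and> m \<ge> 1")
    case True
    then show ?thesis using main_case[OF ms hb] by blast
  next
    case False
    have z: "\<And>om. max_iterations n r m vars om = 0" by (rule triv_case[OF False])
    show ?thesis unfolding z by simp
  qed
qed

end
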